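(* Let $N$ be a finite nonempty set, $p\notin N$ and $N'=N\cup\{p\}$. Let $\mathscr{C}=\{S_1,\dots,S_k\}$ be a minimal balanced collection on $N$ with (unique) balancing weights $(\lambda_{S_i})_{i\in[k]}$. Let $I\subseteq[k]$ satisfy $\lambda_I:=\sum_{i\in I}\lambda_{S_i}<1$. Then $$\mathscr{C}'=\{S_i\cup\{p\}\mid i\in I\}\cup\{S_i\mid i\in[k]\setminus I\}\cup\{\{p\}\}$$ is a minimal balanced collection on $N'$ (with balancing weights $\lambda_{S_i}$ for the sets coming from $S_i$ and $1-\lambda_I$ for $\{p\}$).
   Context: For $T\subseteq N$, $\mathbf{1}^T\in\mathbb{R}^N$ denotes the characteristic vector of $T$. A collection $\mathscr{B}$ of nonempty subsets of a finite set $N$ is balanced if there exist positive weights $(\lambda_S)_{S\in\mathscr{B}}$ (balancing weights) with $\sum_{S\in\mathscr{B}}\lambda_S\mathbf{1}^S=\mathbf{1}^N$. A balanced collection is minimal if it contains no balanced proper subcollection; equivalently, its system of balancing weights is unique. $[k]=\{1,\dots,k\}$. *)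

theory Defs
  imports Main "HOL-Library.Indicator_Function"
begin

definition balancing_weights :: "'a set \<Rightarrow> 'a set set \<Rightarrow> ('a set \<Rightarrow> real) \<Rightarrow> bool" where
  "balancing_weights N B w \<longleftrightarrow>
     (\<forall>S\<in>B. w S > 0) \<and> (\<forall>i\<in>N. (\<Sum>S\<in>B. w S * indicator S i) = 1)"

definition balanced_on :: "'a set \<Rightarrow> 'a set set \<Rightarrow> bool" where
  "balanced_on N B \<longleftrightarrow> finite N \<and> (\<forall>S\<in>B. S \<noteq> {} \<and> S \<subseteq> N) \<and>
     (\<exists>w. balancing_weights N B w)"

definition minimal_balanced_on :: "'a set \<Rightarrow> 'a set set \<Rightarrow> bool" where
  "minimal_balanced_on N B \<longleftrightarrow> balanced_on N B \<and> (\<forall>B'. B' \<subset> B \<longrightarrow> \<not> balanced_on N B')"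

end

theory Submission
  imports Defs
begin

lemma unique_w:
  assumes mb: "minimal_balanced_on N B" and b1: "balancing_weights N B w1"
    and b2: "balancing_weights N B w2" and S0: "S0 \<in> B"
  shows "w1 S0 = w2 S0"
proof (rule ccontr)
  assume ne: "w1 S0 \<noteq> w2 S0"
  have bal: "balanced_on N B" and nob: "\<And>B'. B' \<subset> B \<Longrightarrow> \<not> balanced_on N B'"
    using mb unfolding minimal_balanced_on_def by auto
  have fN: "finite N" and memB: "\<And>S. S \<in> B \<Longrightarrow> S \<noteq> {} \<and> S \<subseteq> N"
    using bal unfolding balanced_on_def by auto
  have fB: "finite B"
    by (rule finite_subset[of B "Pow N"]) (use memB fN in auto)
  define d where "d S = w2 S - w1 S" for S
  have pos1: "\<And>S. S \<in> B \<Longrightarrow> w1 S > 0" and pos2: "\<And>S. S \<in> B \<Longrightarrow> w2 S > 0"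
    using b1 b2 unfolding balancing_weights_def by auto
  have s1: "\<And>x. x \<in> N \<Longrightarrow> (\<Sum>S\<in>B. w1 S * indicator S x) = 1"
   and s2: "\<And>x. x \<in> N \<Longrightarrow> (\<Sum>S\<in>B. w2 S * indicator S x) = 1"
    using b1 b2 unfolding balancing_weights_def by auto
  have sd: "(\<Sum>S\<in>B. d S * indicator S x) = 0" if "x \<in> N" for x
  proof -
    have "(\<Sum>S\<in>B. d S * indicator S x) = (\<Sum>S\<in>B. w2 S * indicator S x) - (\<Sum>S\<in>B. w1 S * indicator S x)"
      unfolding d_def by (simp add: left_diff_distrib sum_subtractf)
    thus ?thesis using s1 s2 that by simp
  qed
  have "\<exists>S\<in>B. d S < 0"
  proof (rule ccontr)
    assume "\<not> ?thesis"
    hence nn: "\<And>S. S \<in> B \<Longrightarrow> d S \<ge> 0" by force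
    have "d S0 > 0" using nn[OF S0] ne unfolding d_def by auto
    obtain x where x: "x \<in> S0" using memB[OF S0] by auto
    have xN: "x \<in> N" using memB[OF S0] x by auto
    have "d S0 * indicator S0 x \<le> (\<Sum>S\<in>B. d S * indicator S x)"
      by (rule member_le_sum[OF S0]) (use nn fB in \<open>auto simp: indicator_def\<close>)
    thus False using sd[OF xN] \<open>d S0 > 0\<close> x by simp
  qed
  define D where "D = {S\<in>B. d S < 0}"
  have fD: "finite D" and neD: "D \<noteq> {}" using fB \<open>\<exists>S\<in>B. d S < 0\<close> unfolding D_def by auto
  define t where "t = Min ((\<lambda>S. w1 S / (- d S)) ` D)"
  have "t \<in> (\<lambda>S. w1 S / (- d S)) ` D"
    unfolding t_def by (rule Min_in) (use fD neD in auto)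
  then obtain S1 where S1: "S1 \<in> D" "t = w1 S1 / (- d S1)" by blast
  have tle: "\<And>S. S \<in> D \<Longrightarrow> t \<le> w1 S / (- d S)"
    unfolding t_def using fD by auto
  have "w1 S1 > 0" "- d S1 > 0" using S1 pos1 unfolding D_def by auto
  hence tpos: "t > 0" using S1(2) by (metis divide_pos_pos)
  define v where "v S = w1 S + t * d S" for S
  have vnn: "v S \<ge> 0" if "S \<in> B" for S
  proof (cases "d S < 0")
    case True
    hence "t \<le> w1 S / (- d S)" using tle that unfolding D_def by auto
    moreover have md: "- d S > 0" using True by simp
    ultimately have "t * (- d S) \<le> w1 S" using pos_le_divide_eq[OF md] by blast
    thus ?thesis unfolding v_def by simp
  next
    case False
    thus ?thesis using pos1[OF that] tpos unfolding v_def by simp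
  qed
  have v1: "v S1 = 0" using S1 unfolding v_def D_def by (simp add: field_simps)
  define B' where "B' = {S\<in>B. v S > 0}"
  have "S1 \<notin> B'" using v1 unfolding B'_def by simp
  moreover have "S1 \<in> B" using S1 unfolding D_def by simp
  ultimately have sub: "B' \<subset> B" unfolding B'_def by blast
  have "balanced_on N B'"
    unfolding balanced_on_def
  proof (intro conjI exI)
    show "finite N" by fact
    show "\<forall>S\<in>B'. S \<noteq> {} \<and> S \<subseteq> N" using memB unfolding B'_def by auto
    show "balancing_weights N B' v"
      unfolding balancing_weights_def
    proof (intro conjI ballI)
      fix S assume "S \<in> B'" thus "v S > 0" unfolding B'_def by auto
    next
      fix x assume xN: "x \<in> N"
      have "(\<Sum>S\<in>B'. v S * indicator S x) = (\<Sum>S\<in>B. v S * indicator S x)"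
      proof (rule sum.mono_neutral_left[OF fB])
        show "B' \<subseteq> B" unfolding B'_def by auto
        show "\<forall>S\<in>B - B'. v S * indicator S x = 0"
        proof
          fix S assume "S \<in> B - B'"
          hence "v S = 0" using vnn[of S] unfolding B'_def by auto
          thus "v S * indicator S x = 0" by simp
        qed
      qed
      also have "\<dots> = (\<Sum>S\<in>B. w1 S * indicator S x) + t * (\<Sum>S\<in>B. d S * indicator S x)"
        unfolding v_def by (simp add: distrib_right sum.distrib sum_distrib_left mult.assoc)
      also have "\<dots> = 1" using s1[OF xN] sd[OF xN] by simp
      finally show "(\<Sum>S\<in>B'. v S * indicator S x) = 1" .
    qed
  qed
  thus False using nob[OF sub] by simp
qed

theorem lemma4p2:
  fixes N :: "'a set" and p :: 'a and k :: nat and S :: "nat \<Rightarrow> 'a set"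
    and lam :: "'a set \<Rightarrow> real" and I :: "nat set"
  assumes "finite N" and "N \<noteq> {}" and "p \<notin> N"
    and "inj_on S {1..k}"
    and "minimal_balanced_on N (S ` {1..k})"
    and "balancing_weights N (S ` {1..k}) lam"
    and "I \<subseteq> {1..k}"
    and "(\<Sum>i\<in>I. lam (S i)) < 1"
  shows "minimal_balanced_on (insert p N)
           ((\<lambda>i. S i \<union> {p}) ` I \<union> S ` ({1..k} - I) \<union> {{p}})
       \<and> balancing_weights (insert p N)
           ((\<lambda>i. S i \<union> {p}) ` I \<union> S ` ({1..k} - I) \<union> {{p}})
           (\<lambda>T. if T = {p} then 1 - (\<Sum>i\<in>I. lam (S i))
                else if p \<in> T then lam (T - {p}) else lam T)"

proof -
  define g where "g i = (if i \<in> I then S i \<union> {p} else S i)" for i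
  define L where "L = (\<Sum>i\<in>I. lam (S i))"
  define w where "w = (\<lambda>T. if T = {p} then 1 - (\<Sum>i\<in>I. lam (S i))
                else if p \<in> T then lam (T - {p}) else lam T)"
  define C' where "C' = (\<lambda>i. S i \<union> {p}) ` I \<union> S ` ({1..k} - I) \<union> {{p}}"
  have memC: "\<And>T. T \<in> S ` {1..k} \<Longrightarrow> T \<noteq> {} \<and> T \<subseteq> N"
    using assms(5) unfolding minimal_balanced_on_def balanced_on_def by auto
  have lampos: "\<And>i. i \<in> {1..k} \<Longrightarrow> lam (S i) > 0"
    using assms(6) unfolding balancing_weights_def by auto
  have lamsum: "\<And>x. x \<in> N \<Longrightarrow> (\<Sum>T\<in>S ` {1..k}. lam T * indicator T x) = 1"
    using assms(6) unfolding balancing_weights_def by auto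
  have Sne: "\<And>i. i \<in> {1..k} \<Longrightarrow> S i \<noteq> {} \<and> S i \<subseteq> N" using memC by auto
  have pS: "\<And>i. i \<in> {1..k} \<Longrightarrow> p \<notin> S i" using Sne assms(3) by blast
  have C'g: "C' = g ` {1..k} \<union> {{p}}"
    unfolding C'_def g_def using assms(7) by (auto simp: image_def)
  have gmp: "\<And>i. i \<in> {1..k} \<Longrightarrow> g i - {p} = S i" using pS unfolding g_def by auto
  have ginj: "inj_on g {1..k}"
  proof (rule inj_onI)
    fix i j assume "i \<in> {1..k}" "j \<in> {1..k}" "g i = g j"
    hence "S i = S j" using gmp by metis
    thus "i = j" using assms(4) \<open>i \<in> {1..k}\<close> \<open>j \<in> {1..k}\<close> by (meson inj_onD)
  qed
  have gnp: "\<And>i. i \<in> {1..k} \<Longrightarrow> g i \<noteq> {p}"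
    using Sne gmp by (metis Diff_cancel)
  have wg: "\<And>i. i \<in> {1..k} \<Longrightarrow> w (g i) = lam (S i)"
    using gnp gmp pS unfolding w_def g_def by auto
  have indg: "\<And>i x. i \<in> {1..k} \<Longrightarrow> x \<noteq> p \<Longrightarrow> indicator (g i) x = (indicator (S i) x :: real)"
    unfolding g_def by (auto simp: indicator_def)
  have indgp: "\<And>i. i \<in> {1..k} \<Longrightarrow> indicator (g i) p = (if i \<in> I then 1 else 0 :: real)"
    using pS unfolding g_def by (auto simp: indicator_def)
  have fk: "finite {1..k}" by simp
  have pnotin: "{p} \<notin> g ` {1..k}" by (metis gnp imageE)
  have sumC: "(\<Sum>T\<in>g ` A \<union> {{p}}. f T) = (\<Sum>i\<in>A. f (g i)) + f {p}" if "A \<subseteq> {1..k}" for A and f :: "'a set \<Rightarrow> real"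
  proof -
    have "(\<Sum>T\<in>g ` A \<union> {{p}}. f T) = (\<Sum>T\<in>g ` A. f T) + f {p}"
      using pnotin that finite_subset[OF that fk] by (subst sum.union_disjoint) auto
    also have "(\<Sum>T\<in>g ` A. f T) = (\<Sum>i\<in>A. f (g i))"
      by (rule sum.reindex[unfolded comp_def]) (rule inj_on_subset[OF ginj that])
    finally show ?thesis .
  qed
  have sumS: "(\<Sum>T\<in>S ` A. f T) = (\<Sum>i\<in>A. f (S i))" if "A \<subseteq> {1..k}" for A and f :: "'a set \<Rightarrow> real"
    by (rule sum.reindex[unfolded comp_def]) (rule inj_on_subset[OF assms(4) that])
  have Lsum: "L = (\<Sum>i\<in>{1..k}. lam (S i) * (if i \<in> I then 1 else 0))"
  proof -
    have "(\<Sum>i\<in>{1..k}. lam (S i) * (if i \<in> I then 1 else 0)) = (\<Sum>i\<in>{1..k}. if i \<in> I then lam (S i) else 0)"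
      by (rule sum.cong) auto
    also have "\<dots> = (\<Sum>i\<in>{1..k} \<inter> I. lam (S i))" by (rule sum.inter_restrict[symmetric]) simp
    also have "{1..k} \<inter> I = I" using assms(7) by blast
    finally show ?thesis unfolding L_def by simp
  qed
  have bw: "balancing_weights (insert p N) C' w"
    unfolding balancing_weights_def C'g
  proof (intro conjI ballI)
    fix T assume "T \<in> g ` {1..k} \<union> {{p}}"
    thus "w T > 0"
    proof
      assume "T \<in> g ` {1..k}"
      then obtain i where "i \<in> {1..k}" "T = g i" by auto
      thus ?thesis using wg lampos by simp
    next
      assume "T \<in> {{p}}"
      thus ?thesis using assms(8) unfolding w_def by simp
    qed
  next
    fix x assume x: "x \<in> insert p N"
    have e: "(\<Sum>T\<in>g ` {1..k} \<union> {{p}}. w T * indicator T x) =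
        (\<Sum>i\<in>{1..k}. lam (S i) * indicator (g i) x) + w {p} * indicator {p} x"
      using sumC[of "{1..k}" "\<lambda>T. w T * indicator T x"] wg by simp
    show "(\<Sum>T\<in>g ` {1..k} \<union> {{p}}. w T * indicator T x) = 1"
    proof (cases "x = p")
      case True
      thus ?thesis unfolding e using indgp Lsum unfolding w_def L_def by simp
    next
      case False
      hence xN: "x \<in> N" using x by auto
      have "(\<Sum>i\<in>{1..k}. lam (S i) * indicator (g i) x) = (\<Sum>i\<in>{1..k}. lam (S i) * indicator (S i) x)"
        using indg False by simp
      also have "\<dots> = 1" using lamsum[OF xN] sumS[of "{1..k}"] by simp
      finally show ?thesis unfolding e using False by simp
    qed
  qed
  have minC: "\<not> balanced_on (insert p N) B'" if sub: "B' \<subset> C'" for B'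
  proof
    assume bB: "balanced_on (insert p N) B'"
    then obtain v where v: "balancing_weights (insert p N) B' v" unfolding balanced_on_def by auto
    have vpos: "\<And>T. T \<in> B' \<Longrightarrow> v T > 0" and vs: "\<And>x. x \<in> insert p N \<Longrightarrow> (\<Sum>T\<in>B'. v T * indicator T x) = 1"
      using v unfolding balancing_weights_def by auto
    define J where "J = {i\<in>{1..k}. g i \<in> B'}"
    have J: "J \<subseteq> {1..k}" unfolding J_def by auto
    have B'eq: "B' = g ` J \<union> (B' \<inter> {{p}})" using sub unfolding C'g J_def by auto
    define v' where "v' U = (if U \<in> S ` I then v (U \<union> {p}) else v U)" for U
    have v'S: "\<And>i. i \<in> {1..k} \<Longrightarrow> v' (S i) = v (g i)"
    proof -
      fix i assume i: "i \<in> {1..k}"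
      have "S i \<in> S ` I \<longleftrightarrow> i \<in> I"
        using assms(4) assms(7) i by (auto dest: inj_onD)
      thus "v' (S i) = v (g i)" unfolding v'_def g_def by auto
    qed
    have sumB': "(\<Sum>T\<in>B'. f T) = (\<Sum>i\<in>J. f (g i)) + (if {p} \<in> B' then f {p} else 0)" for f :: "'a set \<Rightarrow> real"
    proof (cases "{p} \<in> B'")
      case True
      hence "B' = g ` J \<union> {{p}}" using B'eq by auto
      thus ?thesis using sumC[OF J, of f] True by simp
    next
      case False
      hence "B' = g ` J" using B'eq by auto
      thus ?thesis using False sum.reindex[OF inj_on_subset[OF ginj J], of f] by simp
    qed
    have balJ: "balancing_weights N (S ` J) v'"
      unfolding balancing_weights_def
    proof (intro conjI ballI)
      fix U assume "U \<in> S ` J"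
      then obtain i where "i \<in> J" "U = S i" by auto
      thus "v' U > 0" using v'S vpos J unfolding J_def by auto
    next
      fix x assume xN: "x \<in> N"
      hence xp: "x \<noteq> p" using assms(3) by auto
      have "(\<Sum>U\<in>S ` J. v' U * indicator U x) = (\<Sum>i\<in>J. v (g i) * indicator (g i) x)"
        using sumS[OF J] v'S indg[OF _ xp] J by (auto intro!: sum.cong)
      also have "\<dots> = (\<Sum>T\<in>B'. v T * indicator T x)" using sumB'[of "\<lambda>T. v T * indicator T x"] xp by simp
      also have "\<dots> = 1" using vs xN by simp
      finally show "(\<Sum>U\<in>S ` J. v' U * indicator U x) = 1" .
    qed
    have "balanced_on N (S ` J)"
      unfolding balanced_on_def using assms(1) balJ memC J by blast
    moreover have "\<forall>B''. B'' \<subset> S ` {1..k} \<longrightarrow> \<not> balanced_on N B''"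
      using assms(5) unfolding minimal_balanced_on_def by (elim conjE)
    ultimately have "\<not> S ` J \<subset> S ` {1..k}" by blast
    moreover have "S ` J \<subseteq> S ` {1..k}" using J by (rule image_mono)
    ultimately have "S ` J = S ` {1..k}" by blast
    hence Jall: "J = {1..k}" using J assms(4)
      by (metis inj_on_image_eq_iff order_refl)
    hence np: "{p} \<notin> B'" using sub B'eq unfolding C'g by auto
    have bk: "balancing_weights N (S ` {1..k}) v'" using balJ Jall by simp
    have eq: "\<And>i. i \<in> {1..k} \<Longrightarrow> v (g i) = lam (S i)"
      using unique_w[OF assms(5) bk assms(6)] v'S by auto
    have "1 = (\<Sum>T\<in>B'. v T * indicator T p)" using vs by simp
    also have "\<dots> = (\<Sum>i\<in>{1..k}. lam (S i) * (if i \<in> I then 1 else 0))"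
      using sumB'[of "\<lambda>T. v T * indicator T p"] np Jall eq indgp by simp
    also have "\<dots> = L" using Lsum by simp
    finally show False using assms(8) unfolding L_def by simp
  qed
  have "balanced_on (insert p N) C'"
    unfolding balanced_on_def
  proof (intro conjI exI)
    show "finite (insert p N)" using assms(1) by simp
    show "\<forall>T\<in>C'. T \<noteq> {} \<and> T \<subseteq> insert p N"
      unfolding C'g
    proof
      fix T assume "T \<in> g ` {1..k} \<union> {{p}}"
      thus "T \<noteq> {} \<and> T \<subseteq> insert p N"
      proof
        assume "T \<in> g ` {1..k}"
        then obtain i where i: "i \<in> {1..k}" "T = g i" by auto
        thus ?thesis using Sne[OF i(1)] unfolding g_def by auto
      qed auto
    qed
    show "balancing_weights (insert p N) C' w" by fact
  qed
  hence "minimal_balanced_on (insert p N) C'"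
    unfolding minimal_balanced_on_def using minC by auto
  thus ?thesis using bw unfolding C'_def w_def by simp
qed

end
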